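(* Let $b \geq 2$, $s \geq 1$ and $m \geq 1$ be integers, and let $\mathcal{P} = \{\boldsymbol{x}_0,\dots,\boldsymbol{x}_{b^m-1}\}$ be a family of $b^m$ points in $[0,1)^s$. Then $\mathcal{P}$ is $s$-admissible in base $b$ if and only if $\mathcal{P}$ is a $(0,m,s)$-net in base $b$. Moreover, $\mathcal{P}$ is not $d$-admissible in base $b$ for any integer $d < s$.
   Context: A $(0,m,s)$-net in base $b$ is a family of $b^m$ points in $[0,1)^s$ such that every interval $\prod_{i=1}^s [a_i b^{-d_i},(a_i+1)b^{-d_i})$ with $d_i \in \mathbb{N}_0$, $a_i \in \{0,\dots,b^{d_i}-1\}$ and volume $b^{-m}$ contains exactly one point of the family. Each $x \in [0,1)$ is written in its $b$-adic expansion $x = \sum_{i\geq 1} x_i b^{-i}$, $x_i \in \{0,\dots,b-1\}$ (not ending in infinitely many digits $b-1$). For $x, y \in [0,1)$, $x \ominus y = \sum_{i \geq 1} z_i b^{-i}$ with $z_i \equiv x_i - y_i \pmod b$, $z_i \in\{0,\dots,b-1\}$. For $z = \sum_{i\geq1} z_i b^{-i}$ with $z_1=\dots=z_k=0$ and $z_{k+1}\neq 0$, set $\|z\|_b = b^{-(k+1)}$, and $\|z\|_b = 0$ if all digits vanish. For points $\boldsymbol{x}=(x^{(1)},\dots,x^{(s)})$, $\boldsymbol{y}$, let $\boldsymbol{x}\ominus\boldsymbol{y} = (x^{(1)}\ominus y^{(1)},\dots,x^{(s)}\ominus y^{(s)})$ and $\|\boldsymbol{z}\|_b = \prod_{j=1}^s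 \|z^{(j)}\|_b$. For an integer $d$, the family $\mathcal{P}$ is $d$-admissible in base $b$ if $\min_{0 \leq k < n < b^m} \|\boldsymbol{x}_n \ominus \boldsymbol{x}_k\|_b > b^{-(m+d)}$. *)

theory Defs
  imports Complex_Main
begin

text \<open>i-th b-adic digit (i >= 1) of x in [0,1); the floor-based digit never
  yields an expansion ending in infinitely many digits b-1.\<close>
definition bdigit :: "nat \<Rightarrow> real \<Rightarrow> nat \<Rightarrow> nat" where
  "bdigit b x i = nat \<lfloor>x * real b ^ i\<rfloor> mod b"

text \<open>The quantity norm_b(x minus_b y): z_i = (x_i - y_i) mod b vanishes iff x_i = y_i,
  so the first nonzero digit of z is the first index where the digits of x and y differ.\<close>
definition ominus_norm :: "nat \<Rightarrow> real \<Rightarrow> real \<Rightarrow> real" where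
  "ominus_norm b x y =
     (if \<forall>i\<ge>1. bdigit b x i = bdigit b y i then 0
      else 1 / real b ^ (LEAST i. 1 \<le> i \<and> bdigit b x i \<noteq> bdigit b y i))"

definition pnorm :: "nat \<Rightarrow> nat \<Rightarrow> (nat \<Rightarrow> real) \<Rightarrow> (nat \<Rightarrow> real) \<Rightarrow> real" where
  "pnorm b s X Y = (\<Prod>j<s. ominus_norm b (X j) (Y j))"

definition admissible :: "nat \<Rightarrow> nat \<Rightarrow> nat \<Rightarrow> int \<Rightarrow> (nat \<Rightarrow> nat \<Rightarrow> real) \<Rightarrow> bool" where
  "admissible b m s d x \<longleftrightarrow>
     Min {pnorm b s (x n) (x k) | k n. k < n \<and> n < b ^ m} > real b powi (- (int m + d))"

text \<open>(0,m,s)-net in base b: every elementary interval of volume b^(-m) contains exactly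
  one point of the family (counted with index). Volume b^(-m) iff sum of d_j = m.\<close>
definition is_net :: "nat \<Rightarrow> nat \<Rightarrow> nat \<Rightarrow> (nat \<Rightarrow> nat \<Rightarrow> real) \<Rightarrow> bool" where
  "is_net b m s x \<longleftrightarrow>
     (\<forall>dd a. (\<forall>j<s. a j < b ^ dd j) \<and> (\<Sum>j<s. dd j) = m \<longrightarrow>
        card {n. n < b ^ m \<and>
                 (\<forall>j<s. real (a j) / real b ^ dd j \<le> x n j \<and>
                        x n j < (real (a j) + 1) / real b ^ dd j)} = 1)"

end

theory Submission
  imports Defs "HOL-Library.FuncSet"
begin

definition fl :: "nat \<Rightarrow> real \<Rightarrow> nat \<Rightarrow> int" where
  "fl b x k = \<lfloor>x * real b ^ k\<rfloor>"

lemma fl_0: "0 \<le> x \<Longrightarrow> x < 1 \<Longrightarrow> fl b x 0 = 0"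
  by (simp add: fl_def floor_eq_iff)

lemma fl_nonneg: "0 \<le> x \<Longrightarrow> 0 \<le> fl b x k"
  by (simp add: fl_def)

lemma fl_less: assumes "b \<ge> 1" "0 \<le> x" "x < 1" shows "fl b x k < int b ^ k"
proof -
  have "x * real b ^ k < real b ^ k" using assms by simp
  hence "x * real b ^ k < real_of_int (int b ^ k)" by simp
  thus ?thesis unfolding fl_def by (simp add: floor_less_iff)
qed

lemma fl_Suc_div: assumes "b \<ge> 2" shows "fl b x (Suc k) div int b = fl b x k"
proof -
  have "fl b x k = \<lfloor>x * real b ^ Suc k / real_of_int (int b)\<rfloor>"
    using assms by (simp add: fl_def)
  also have "\<dots> = fl b x (Suc k) div int b"
    by (subst floor_divide_real_eq_div) (auto simp: fl_def)
  finally show ?thesis by simp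
qed

lemma bdigit_fl: "0 \<le> x \<Longrightarrow> bdigit b x i = nat (fl b x i mod int b)"
  by (simp add: bdigit_def fl_def nat_mod_distrib)

lemma agree_Suc: assumes "b \<ge> 2" "0 \<le> x" "0 \<le> y"
  shows "fl b x (Suc k) = fl b y (Suc k) \<longleftrightarrow>
    fl b x k = fl b y k \<and> bdigit b x (Suc k) = bdigit b y (Suc k)"
proof -
  have d: "fl b z (Suc k) = int b * fl b z k + fl b z (Suc k) mod int b" for z
    using fl_Suc_div[OF assms(1), of z k] by (metis div_mult_mod_eq mult.commute)
  have m: "0 \<le> fl b z (Suc k) mod int b" for z using assms by simp
  show ?thesis
  proof
    assume h: "fl b x (Suc k) = fl b y (Suc k)"
    then have "fl b x k = fl b y k" using fl_Suc_div[OF assms(1), of x k] fl_Suc_div[OF assms(1), of y k] by simp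
    then show "fl b x k = fl b y k \<and> bdigit b x (Suc k) = bdigit b y (Suc k)"
      using h assms by (simp add: bdigit_fl)
  next
    assume h: "fl b x k = fl b y k \<and> bdigit b x (Suc k) = bdigit b y (Suc k)"
    then have "fl b x (Suc k) mod int b = fl b y (Suc k) mod int b"
      using m[of x] m[of y] assms by (simp add: bdigit_fl eq_nat_nat_iff)
    then show "fl b x (Suc k) = fl b y (Suc k)" using d[of x] d[of y] h by simp
  qed
qed

lemma agree_iff: assumes "b \<ge> 2" "0 \<le> x" "x < 1" "0 \<le> y" "y < 1"
  shows "fl b x k = fl b y k \<longleftrightarrow> (\<forall>i. 1 \<le> i \<and> i \<le> k \<longrightarrow> bdigit b x i = bdigit b y i)"
proof (induction k)
  case 0
  then show ?case using assms fl_0 by auto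
next
  case (Suc k)
  show ?case unfolding agree_Suc[OF assms(1,2,4)] Suc
    by (auto simp: le_Suc_eq)
qed


lemma on_le: assumes "b \<ge> 2" "0 \<le> x" "x < 1" "0 \<le> y" "y < 1"
  shows "ominus_norm b x y \<le> 1 / real b ^ Suc k \<longleftrightarrow> fl b x k = fl b y k"
proof (cases "\<forall>i\<ge>1. bdigit b x i = bdigit b y i")
  case True
  then show ?thesis using agree_iff[OF assms] by (simp add: ominus_norm_def)
next
  case False
  define L where "L = (LEAST i. 1 \<le> i \<and> bdigit b x i \<noteq> bdigit b y i)"
  have ex: "\<exists>i. 1 \<le> i \<and> bdigit b x i \<noteq> bdigit b y i" using False by auto
  have L1: "1 \<le> L \<and> bdigit b x L \<noteq> bdigit b y L"
    unfolding L_def using LeastI_ex[OF ex] .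
  have Lmin: "\<And>i. 1 \<le> i \<Longrightarrow> i < L \<Longrightarrow> bdigit b x i = bdigit b y i"
    unfolding L_def using not_less_Least by blast
  have on: "ominus_norm b x y = 1 / real b ^ L"
    unfolding ominus_norm_def L_def by (rule if_not_P[OF False])
  have "1 / real b ^ L \<le> 1 / real b ^ Suc k \<longleftrightarrow> Suc k \<le> L"
  proof -
    have "1 / real b ^ L \<le> 1 / real b ^ Suc k \<longleftrightarrow> real b ^ Suc k \<le> real b ^ L"
      using assms(1) by (simp add: divide_simps del: power_Suc)
    also have "\<dots> \<longleftrightarrow> Suc k \<le> L"
      by (rule power_increasing_iff) (use assms(1) in simp)
    finally show ?thesis .
  qed
  also have "\<dots> \<longleftrightarrow> (\<forall>i. 1 \<le> i \<and> i \<le> k \<longrightarrow> bdigit b x i = bdigit b y i)"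
    using L1 Lmin by (metis Suc_le_eq le_less_trans not_less_eq_eq)
  finally show ?thesis using on agree_iff[OF assms] by simp
qed

lemma on_cases: "ominus_norm b x y = 0 \<or> (\<exists>c. ominus_norm b x y = 1 / real b ^ Suc c)"
proof (cases "\<forall>i\<ge>1. bdigit b x i = bdigit b y i")
  case True
  then show ?thesis by (simp add: ominus_norm_def)
next
  case False
  define L where "L = (LEAST i. 1 \<le> i \<and> bdigit b x i \<noteq> bdigit b y i)"
  have ex: "\<exists>i. 1 \<le> i \<and> bdigit b x i \<noteq> bdigit b y i" using False by auto
  have L1: "1 \<le> L" unfolding L_def using LeastI_ex[OF ex] by blast
  have on: "ominus_norm b x y = 1 / real b ^ L"
    unfolding ominus_norm_def L_def by (rule if_not_P[OF False])
  then have "ominus_norm b x y = 1 / real b ^ Suc (L - 1)" using L1 by simp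
  then show ?thesis by blast
qed

lemma on_nonneg: "0 \<le> ominus_norm b x y"
  by (simp add: ominus_norm_def)


lemma inv_pow_le: assumes "b \<ge> 2" shows "1 / real b ^ n \<le> 1 / real b ^ m \<longleftrightarrow> m \<le> n"
proof -
  have "1 / real b ^ n \<le> 1 / real b ^ m \<longleftrightarrow> real b ^ m \<le> real b ^ n"
    using assms by (simp add: divide_simps)
  also have "\<dots> \<longleftrightarrow> m \<le> n"
    by (rule power_increasing_iff) (use assms in simp)
  finally show ?thesis .
qed

lemma split_sum: "(t::nat) \<le> (\<Sum>j<(s::nat). (c::nat\<Rightarrow>nat) j) \<Longrightarrow> \<exists>dd. (\<Sum>j<s. dd j) = t \<and> (\<forall>j<s. dd j \<le> c j)"
proof (induction s arbitrary: t)
  case 0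
  then show ?case by auto
next
  case (Suc s)
  show ?case
  proof (cases "t \<le> (\<Sum>j<s. c j)")
    case True
    then obtain dd where dd: "(\<Sum>j<s. dd j) = t" "\<forall>j<s. dd j \<le> c j" using Suc.IH by blast
    define dd' where "dd' = dd(s := 0)"
    have "(\<Sum>j<s. dd' j) = (\<Sum>j<s. dd j)" unfolding dd'_def by (rule sum.cong) auto
    then show ?thesis using dd by (intro exI[of _ dd']) (auto simp: dd'_def less_Suc_eq)
  next
    case False
    define dd' where "dd' = c(s := t - (\<Sum>j<s. c j))"
    have "(\<Sum>j<s. dd' j) = (\<Sum>j<s. c j)" unfolding dd'_def by (rule sum.cong) auto
    then show ?thesis using False Suc.prems by (intro exI[of _ dd']) (auto simp: dd'_def less_Suc_eq)
  qed
qed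

lemma prod_inv_pow: "(\<Prod>j<s. 1 / real b ^ Suc (c j)) = 1 / real b ^ ((\<Sum>j<s. c j) + s)"
proof -
  have "(\<Prod>j<s. 1 / real b ^ Suc (c j)) = (\<Prod>j<s. (1 / real b) ^ Suc (c j))"
    by (simp add: power_one_over)
  also have "\<dots> = (1 / real b) ^ (\<Sum>j<s. Suc (c j))" by (simp add: power_sum)
  also have "(\<Sum>j<s. Suc (c j)) = (\<Sum>j<s. c j) + s" by (induction s) auto
  finally show ?thesis by (simp add: power_one_over)
qed

lemma pnorm_le: assumes b: "b \<ge> 2" and s: "s \<ge> 1"
  and XY: "\<forall>j<s. 0 \<le> X j \<and> X j < 1 \<and> 0 \<le> Y j \<and> Y j < 1"
  shows "pnorm b s X Y \<le> 1 / real b ^ (t + s) \<longleftrightarrow>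
    (\<exists>dd. (\<Sum>j<s. dd j) = t \<and> (\<forall>j<s. fl b (X j) (dd j) = fl b (Y j) (dd j)))"
proof
  assume "\<exists>dd. (\<Sum>j<s. dd j) = t \<and> (\<forall>j<s. fl b (X j) (dd j) = fl b (Y j) (dd j))"
  then obtain dd where dd: "(\<Sum>j<s. dd j) = t" "\<forall>j<s. fl b (X j) (dd j) = fl b (Y j) (dd j)"
    by blast
  have "pnorm b s X Y \<le> (\<Prod>j<s. 1 / real b ^ Suc (dd j))"
    unfolding pnorm_def
    by (rule prod_mono) (use dd(2) XY on_le[OF b] on_nonneg in auto)
  also have "\<dots> = 1 / real b ^ (t + s)" using prod_inv_pow[of b dd s] dd(1) by simp
  finally show "pnorm b s X Y \<le> 1 / real b ^ (t + s)" .
next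
  assume le: "pnorm b s X Y \<le> 1 / real b ^ (t + s)"
  show "\<exists>dd. (\<Sum>j<s. dd j) = t \<and> (\<forall>j<s. fl b (X j) (dd j) = fl b (Y j) (dd j))"
  proof (cases "\<exists>j0<s. ominus_norm b (X j0) (Y j0) = 0")
    case True
    then obtain j0 where j0: "j0 < s" "ominus_norm b (X j0) (Y j0) = 0" by blast
    define dd where "dd = (\<lambda>j. if j = j0 then t else 0)"
    have "(\<Sum>j<s. dd j) = t" using j0 by (simp add: dd_def)
    moreover have "fl b (X j) (dd j) = fl b (Y j) (dd j)" if "j < s" for j
    proof (cases "j = j0")
      case True
      then show ?thesis using j0 XY that on_le[OF b, of "X j0" "Y j0" t] by (simp add: dd_def)
    next
      case False
      then show ?thesis using XY that fl_0 by (simp add: dd_def)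
    qed
    ultimately show ?thesis by blast
  next
    case False
    then have "\<forall>j<s. \<exists>c. ominus_norm b (X j) (Y j) = 1 / real b ^ Suc c"
      using on_cases by blast
    then obtain c where c: "\<forall>j<s. ominus_norm b (X j) (Y j) = 1 / real b ^ Suc (c j)"
      by metis
    have "pnorm b s X Y = (\<Prod>j<s. 1 / real b ^ Suc (c j))"
      unfolding pnorm_def by (rule prod.cong) (use c in auto)
    also have "\<dots> = 1 / real b ^ ((\<Sum>j<s. c j) + s)" by (rule prod_inv_pow)
    finally have "t + s \<le> (\<Sum>j<s. c j) + s" using le inv_pow_le[OF b] by simp
    then obtain dd where dd: "(\<Sum>j<s. dd j) = t" "\<forall>j<s. dd j \<le> c j"
      using split_sum[of t c s] by auto
    have "fl b (X j) (dd j) = fl b (Y j) (dd j)" if "j < s" for j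
    proof -
      have "ominus_norm b (X j) (Y j) \<le> 1 / real b ^ Suc (dd j)"
        using c that dd(2) inv_pow_le[OF b, of "Suc (c j)" "Suc (dd j)"] by simp
      then show ?thesis using on_le[OF b] XY that by auto
    qed
    then show ?thesis using dd(1) by blast
  qed
qed


lemma interval_iff: assumes "b \<ge> 1"
  shows "(real a / real b ^ d \<le> X \<and> X < (real a + 1) / real b ^ d) \<longleftrightarrow> fl b X d = int a"
  using assms by (simp add: fl_def floor_eq_iff field_simps)

lemma net_iff: assumes b: "b \<ge> 2"
  and xin: "\<forall>n<b ^ m. \<forall>j<s. 0 \<le> x n j \<and> x n j < 1"
  shows "is_net b m s x \<longleftrightarrow> (\<forall>k n. k < n \<and> n < b ^ m \<longrightarrow>
     \<not> (\<exists>dd. (\<Sum>j<s. dd j) = m \<and> (\<forall>j<s. fl b (x n j) (dd j) = fl b (x k j) (dd j))))"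
proof -
  have setc: "{n. n < b ^ m \<and> (\<forall>j<s. real (a j) / real b ^ dd j \<le> x n j \<and>
                        x n j < (real (a j) + 1) / real b ^ dd j)}
     = {n. n < b ^ m \<and> (\<forall>j<s. fl b (x n j) (dd j) = int (a j))}" for a dd
    using interval_iff[of b] b by auto
  show ?thesis
  proof
    assume net: "is_net b m s x"
    show "\<forall>k n. k < n \<and> n < b ^ m \<longrightarrow>
     \<not> (\<exists>dd. (\<Sum>j<s. dd j) = m \<and> (\<forall>j<s. fl b (x n j) (dd j) = fl b (x k j) (dd j)))"
    proof (intro allI impI notI)
      fix k n assume kn: "k < n \<and> n < b ^ m"
        and "\<exists>dd. (\<Sum>j<s. dd j) = m \<and> (\<forall>j<s. fl b (x n j) (dd j) = fl b (x k j) (dd j))"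
      then obtain dd where dd: "(\<Sum>j<s. dd j) = m" "\<forall>j<s. fl b (x n j) (dd j) = fl b (x k j) (dd j)"
        by blast
      define a where "a = (\<lambda>j. nat (fl b (x n j) (dd j)))"
      have aeq: "int (a j) = fl b (x n j) (dd j)" if "j < s" for j
        using fl_nonneg xin kn that by (simp add: a_def)
      have alt: "a j < b ^ dd j" if "j < s" for j
      proof -
        have "fl b (x n j) (dd j) < int b ^ dd j"
          using fl_less[of b "x n j" "dd j"] b xin kn that by auto
        then have "int (a j) < int (b ^ dd j)" using aeq[OF that] by simp
        then show ?thesis by linarith
      qed
      define S where "S = {n. n < b ^ m \<and> (\<forall>j<s. fl b (x n j) (dd j) = int (a j))}"
      have c1: "card S = 1"
        using net alt dd(1) unfolding is_net_def setc S_def by blast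
      have i1: "n \<in> S"
        using kn aeq unfolding S_def by auto
      have i2: "k \<in> S"
        using kn aeq dd(2) unfolding S_def by auto
      obtain z where "S = {z}" using card_1_singletonE[OF c1] by blast
      then have "n = z" "k = z" using i1 i2 by (metis singletonD)+
      then show False using kn by simp
    qed
  next
    assume nc: "\<forall>k n. k < n \<and> n < b ^ m \<longrightarrow>
     \<not> (\<exists>dd. (\<Sum>j<s. dd j) = m \<and> (\<forall>j<s. fl b (x n j) (dd j) = fl b (x k j) (dd j)))"
    show "is_net b m s x"
      unfolding is_net_def setc
    proof (intro allI impI)
      fix dd a assume h: "(\<forall>j<s. a j < b ^ dd j) \<and> (\<Sum>j<s. dd j) = m"
      define g where "g = (\<lambda>n. restrict (\<lambda>j. nat (fl b (x n j) (dd j))) {..<s})"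
      define T where "T = PiE {..<s} (\<lambda>j. {..<b ^ dd j})"
      have gfl: "g n = g k \<Longrightarrow> n < b ^ m \<Longrightarrow> k < b ^ m \<Longrightarrow> j < s \<Longrightarrow>
          fl b (x n j) (dd j) = fl b (x k j) (dd j)" for n k j
      proof -
        assume gnk: "g n = g k" and "n < b ^ m" "k < b ^ m" "j < s"
        have "g n j = g k j" using gnk by simp
        moreover have "g i j = nat (fl b (x i j) (dd j))" for i
          using \<open>j < s\<close> by (simp add: g_def)
        ultimately have "nat (fl b (x n j) (dd j)) = nat (fl b (x k j) (dd j))" by simp
        then show ?thesis using fl_nonneg xin \<open>n < b ^ m\<close> \<open>k < b ^ m\<close> \<open>j < s\<close>
          by (simp add: eq_nat_nat_iff)
      qed
      have inj: "inj_on g {..<b ^ m}"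
      proof (rule inj_onI)
        fix n k assume "n \<in> {..<b ^ m}" "k \<in> {..<b ^ m}" "g n = g k"
        show "n = k"
        proof (rule ccontr)
          assume "n \<noteq> k"
          then consider "n < k" | "k < n" by linarith
          then show False
          proof cases
            case 1
            then show False using nc \<open>g n = g k\<close> gfl[of k n] h \<open>n \<in> _\<close> \<open>k \<in> _\<close>
              by (metis lessThan_iff)
          next
            case 2
            then show False using nc \<open>g n = g k\<close> gfl[of n k] h \<open>n \<in> _\<close> \<open>k \<in> _\<close>
              by (metis lessThan_iff)
          qed
        qed
      qed
      have sub: "g ` {..<b ^ m} \<subseteq> T"
      proof
        fix y assume "y \<in> g ` {..<b ^ m}"
        then obtain n where n: "n < b ^ m" "y = g n" by auto
        have "nat (fl b (x n j) (dd j)) < b ^ dd j" if "j < s" for j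
        proof -
          have "fl b (x n j) (dd j) < int b ^ dd j"
            using fl_less[of b "x n j" "dd j"] b xin n that by auto
          then have "fl b (x n j) (dd j) < int (b ^ dd j)" by simp
          then show ?thesis using fl_nonneg xin n that by (simp add: nat_less_iff)
        qed
        then show "y \<in> T" unfolding T_def n g_def by auto
      qed
      have cardT: "card T = b ^ m"
        unfolding T_def using h by (simp add: card_PiE power_sum[symmetric])
      have finT: "finite T" unfolding T_def by (simp add: finite_PiE)
      have eq: "g ` {..<b ^ m} = T"
        by (rule card_subset_eq[OF finT sub]) (simp add: card_image[OF inj] cardT)
      have "restrict a {..<s} \<in> T" unfolding T_def using h by auto
      then obtain n0 where n0: "n0 < b ^ m" "g n0 = restrict a {..<s}"
        using eq by (metis imageE lessThan_iff)
      have ga: "g n = restrict a {..<s} \<longleftrightarrow> (\<forall>j<s. fl b (x n j) (dd j) = int (a j))"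
        if "n < b ^ m" for n
      proof
        assume gn: "g n = restrict a {..<s}"
        have "nat (fl b (x n j) (dd j)) = a j" if "j < s" for j
        proof -
          have "g n j = restrict a {..<s} j" using gn by simp
          then show ?thesis using that by (simp add: g_def)
        qed
        then show "\<forall>j<s. fl b (x n j) (dd j) = int (a j)"
          using fl_nonneg xin \<open>n < b ^ m\<close> by (metis int_nat_eq)
      next
        assume "\<forall>j<s. fl b (x n j) (dd j) = int (a j)"
        then show "g n = restrict a {..<s}" unfolding g_def by (auto simp: restrict_def)
      qed
      have "{n. n < b ^ m \<and> (\<forall>j<s. fl b (x n j) (dd j) = int (a j))} = {n0}"
      proof (intro equalityI subsetI)
        fix n assume "n \<in> {n. n < b ^ m \<and> (\<forall>j<s. fl b (x n j) (dd j) = int (a j))}"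
        then have "n < b ^ m" "g n = restrict a {..<s}" using ga by auto
        then have nn: "n < b ^ m" "g n = g n0" using n0 by auto
        have "n = n0" by (rule inj_onD[OF inj nn(2)]) (use nn n0 in auto)
        then show "n \<in> {n0}" by simp
      next
        fix n assume "n \<in> {n0}"
        then show "n \<in> {n. n < b ^ m \<and> (\<forall>j<s. fl b (x n j) (dd j) = int (a j))}"
          using ga n0 by auto
      qed
      then show "card {n. n < b ^ m \<and> (\<forall>j<s. fl b (x n j) (dd j) = int (a j))} = 1" by simp
    qed
  qed
qed


theorem lemma2p1:
  fixes b s m :: nat and x :: "nat \<Rightarrow> nat \<Rightarrow> real"
  assumes "b \<ge> 2" and "s \<ge> 1" and "m \<ge> 1"
    and "\<forall>n<b ^ m. \<forall>j<s. 0 \<le> x n j \<and> x n j < 1"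
  shows "(admissible b m s (int s) x \<longleftrightarrow> is_net b m s x) \<and>
         (\<forall>d::int. d < int s \<longrightarrow> \<not> admissible b m s d x)"
proof -
  have b: "b \<ge> 2" and s: "s \<ge> 1" and m: "m \<ge> 1" and xin: "\<forall>n<b ^ m. \<forall>j<s. 0 \<le> x n j \<and> x n j < 1"
    using assms by auto
  define P where "P = {pnorm b s (x n) (x k) | k n. k < n \<and> n < b ^ m}"
  have "P \<subseteq> (\<lambda>(k, n). pnorm b s (x n) (x k)) ` ({..<b ^ m} \<times> {..<b ^ m})"
    unfolding P_def by auto
  then have finP: "finite P" by (rule finite_subset) auto
  have "b ^ 1 \<le> b ^ m" using b m by (intro power_increasing) auto
  then have bm: "1 < b ^ m" using b by simp
  then have "pnorm b s (x 1) (x 0) \<in> P" unfolding P_def by auto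
  then have neP: "P \<noteq> {}" by auto
  have adm: "admissible b m s d x \<longleftrightarrow>
     (\<forall>k n. k < n \<and> n < b ^ m \<longrightarrow> real b powi (- (int m + d)) < pnorm b s (x n) (x k))" for d
  proof -
    have "admissible b m s d x \<longleftrightarrow> real b powi (- (int m + d)) < Min P"
      unfolding admissible_def P_def ..
    also have "\<dots> \<longleftrightarrow> (\<forall>a\<in>P. real b powi (- (int m + d)) < a)"
      by (rule Min_gr_iff[OF finP neP])
    also have "\<dots> \<longleftrightarrow> (\<forall>k n. k < n \<and> n < b ^ m \<longrightarrow> real b powi (- (int m + d)) < pnorm b s (x n) (x k))"
      unfolding P_def by blast
    finally show ?thesis .
  qed
  have pl: "pnorm b s (x n) (x k) \<le> 1 / real b ^ (t + s) \<longleftrightarrow>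
     (\<exists>dd. (\<Sum>j<s. dd j) = t \<and> (\<forall>j<s. fl b (x n j) (dd j) = fl b (x k j) (dd j)))"
    if "k < n" "n < b ^ m" for k n t
    by (rule pnorm_le[OF b s]) (use xin that in auto)
  have pw: "real b powi (- (int m + int s)) = 1 / real b ^ (m + s)"
  proof -
    have "int m + int s = int (m + s)" by simp
    then show ?thesis by (simp only: power_int_minus_divide power_int_of_nat)
  qed
  have part1: "admissible b m s (int s) x \<longleftrightarrow> is_net b m s x"
  proof -
    have eqv: "(1 / real b ^ (m + s) < pnorm b s (x n) (x k)) \<longleftrightarrow>
       \<not> (\<exists>dd. (\<Sum>j<s. dd j) = m \<and> (\<forall>j<s. fl b (x n j) (dd j) = fl b (x k j) (dd j)))"
      if "k < n" "n < b ^ m" for k n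
      using pl[OF that, of m] by (metis not_le)
    show ?thesis unfolding adm pw net_iff[OF b xin] using eqv by blast
  qed
  have part2: "\<not> admissible b m s d x" if d: "d < int s" for d
  proof
    assume ad: "admissible b m s d x"
    define h where "h = (\<lambda>n. fl b (x n 0) (m - 1))"
    have hsub: "h ` {..<b ^ m} \<subseteq> {0..<int b ^ (m - 1)}"
    proof
      fix y assume "y \<in> h ` {..<b ^ m}"
      then obtain n where n: "n < b ^ m" "y = h n" by auto
      show "y \<in> {0..<int b ^ (m - 1)}"
        using n fl_nonneg fl_less[of b "x n 0" "m - 1"] xin s b unfolding h_def by auto
    qed
    have "\<not> inj_on h {..<b ^ m}"
    proof
      assume injh: "inj_on h {..<b ^ m}"
      have cB: "card {0..<int b ^ (m - 1)} = b ^ (m - 1)"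
      proof -
        have "int b ^ (m - 1) = int (b ^ (m - 1))" by simp
        then show ?thesis by (simp only: card_atLeastLessThan_int)
      qed
      from card_inj_on_le[OF injh hsub] have "b ^ m \<le> b ^ (m - 1)"
        by (simp only: cB card_lessThan) simp
      moreover have "b ^ (m - 1) < b ^ m" using b m by (intro power_strict_increasing) auto
      ultimately show False by simp
    qed
    then obtain n1 n2 where n12: "n1 < b ^ m" "n2 < b ^ m" "n1 \<noteq> n2" "h n1 = h n2"
      unfolding inj_on_def by auto
    obtain k n where kn: "k < n" "n < b ^ m" "h k = h n"
      using n12 by (metis linorder_neqE_nat)
    define dd where "dd = (\<lambda>j::nat. if j = 0 then m - 1 else 0)"
    have sdd: "(\<Sum>j<s. dd j) = m - 1" using s by (simp add: dd_def)
    have agr: "\<forall>j<s. fl b (x n j) (dd j) = fl b (x k j) (dd j)"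
    proof (intro allI impI)
      fix j assume "j < s"
      then show "fl b (x n j) (dd j) = fl b (x k j) (dd j)"
        using kn xin fl_0 unfolding dd_def h_def by (cases "j = 0") auto
    qed
    have le1: "pnorm b s (x n) (x k) \<le> 1 / real b ^ (m - 1 + s)"
      using pl[OF kn(1,2), of "m - 1"] sdd agr by blast
    have "1 / real b ^ (m - 1 + s) = real b powi (- int (m - 1 + s))"
      by (simp only: power_int_minus_divide power_int_of_nat)
    also have "\<dots> \<le> real b powi (- (int m + d))"
      using d m b by (intro power_int_increasing) auto
    finally have "pnorm b s (x n) (x k) \<le> real b powi (- (int m + d))" using le1 by linarith
    moreover have "real b powi (- (int m + d)) < pnorm b s (x n) (x k)"
      using ad kn unfolding adm by blast
    ultimately show False by simp
  qed
  show ?thesis using part1 part2 by blast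
qed

end
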